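(* Let $\{B(X)\}_{X\in\mathbb R^2}$ be a centered Gaussian process with $B((0,0))=0$ and $\mathrm{Cov}(B(X),B(Y))=\tfrac12\big(d_2((0,0),X)+d_2((0,0),Y)-d_2(X,Y)\big)$. Let $A_1,\ldots,A_n\in\mathbb R^2$, $A_i=(A_i^{(1)},A_i^{(2)})$, be such that: $(0,0)\in\{A_1,\ldots,A_n\}$ and $(A_i^{(1)},0)\in\{A_1,\ldots,A_n\}$ for every $i$; there are positive integers $n_1,\ldots,n_q$ with $n_1+\cdots+n_q=n$ such that, with $N_0=0$, $N_l=n_1+\cdots+n_l$, the first coordinates $A_i^{(1)}$ are constant for $i\in\{N_{l-1}+1,\ldots,N_l\}$ and strictly increase from one group $l$ to the next; and within each group the second coordinates satisfy $A_{N_{l-1}+1}^{(2)}\le A_{N_{l-1}+2}^{(2)}\le\cdots\le A_{N_l}^{(2)}$. Then there exist independent Gaussian random variables $Z_1,\ldots,Z_{n-1}$ and subsets $I_1,\ldots,I_n\subset\{1,\ldots,n-1\}$ such that $\big(B(A_1),\ldots,B(A_n)\big)$ has the same distribution as $\big(\sum_{k\in I_1}Z_k,\ldots,\sum_{k\in I_n}Z_k\big)$.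
   Context: The river metric on $\mathbb R^2$ is $d_2(A,B)=|A^{(2)}-B^{(2)}|$ if $A^{(1)}=B^{(1)}$, and $d_2(A,B)=|A^{(2)}|+|A^{(1)}-B^{(1)}|+|B^{(2)}|$ if $A^{(1)}\neq B^{(1)}$. *)

theory Defs
  imports "HOL-Probability.Probability"
begin

definition river_dist :: "real \<times> real \<Rightarrow> real \<times> real \<Rightarrow> real" where
  "river_dist A B =
     (if fst A = fst B then \<bar>snd A - snd B\<bar>
      else \<bar>snd A\<bar> + \<bar>fst A - fst B\<bar> + \<bar>snd B\<bar>)"

definition centered_gaussian_rv :: "'a measure \<Rightarrow> ('a \<Rightarrow> real) \<Rightarrow> bool" where
  "centered_gaussian_rv M Y \<longleftrightarrow>
     Y \<in> borel_measurable M \<and>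
     ((AE \<omega> in M. Y \<omega> = 0) \<or> (\<exists>\<sigma>>0. distributed M lborel Y (normal_density 0 \<sigma>)))"

definition gaussian_rv :: "'a measure \<Rightarrow> ('a \<Rightarrow> real) \<Rightarrow> bool" where
  "gaussian_rv M Y \<longleftrightarrow> (\<exists>\<mu> \<sigma>. \<sigma> > 0 \<and> distributed M lborel Y (normal_density \<mu> \<sigma>))"

definition centered_gaussian_process :: "'a measure \<Rightarrow> ('t \<Rightarrow> 'a \<Rightarrow> real) \<Rightarrow> bool" where
  "centered_gaussian_process M B \<longleftrightarrow>
     prob_space M \<and> (\<forall>t. B t \<in> borel_measurable M) \<and>
     (\<forall>F c. finite F \<longrightarrow> centered_gaussian_rv M (\<lambda>\<omega>. \<Sum>t\<in>F. c t * B t \<omega>))"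

end

theory Submission
  imports Defs
begin

lemma char_unique_finite:
  fixes \<mu> \<nu> :: "real measure"
  assumes fm: "finite_measure \<mu>" "finite_measure \<nu>" and s: "sets \<mu> = sets borel" "sets \<nu> = sets borel"
    and ch: "char \<mu> = char \<nu>"
  shows "\<mu> = \<nu>"
proof -
  have sp: "space \<mu> = UNIV" "space \<nu> = UNIV" using sets_eq_imp_space_eq[OF s(1)] sets_eq_imp_space_eq[OF s(2)] by simp_all
  have "char \<mu> 0 = of_real (measure \<mu> UNIV)" "char \<nu> 0 = of_real (measure \<nu> UNIV)"
    unfolding char_def using sp by (simp_all add: scaleR_conv_of_real)
  with ch have c: "measure \<mu> UNIV = measure \<nu> UNIV" by simp
  define c where "c = measure \<mu> UNIV"
  have em: "emeasure \<mu> UNIV = ennreal c" "emeasure \<nu> UNIV = ennreal c"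
    using fm c sp unfolding c_def by (auto simp: finite_measure.emeasure_eq_measure)
  show ?thesis
  proof (cases "c = 0")
    case True
    show ?thesis
    proof (rule measure_eqI)
      fix A assume "A \<in> sets \<mu>"
      have "emeasure \<mu> A \<le> emeasure \<mu> UNIV" "emeasure \<nu> A \<le> emeasure \<nu> UNIV"
        using sp by (auto intro!: emeasure_mono simp: s sets.top[of \<mu>, unfolded sp] sets.top[of \<nu>, unfolded sp])
      then show "emeasure \<mu> A = emeasure \<nu> A" using em True by simp
    qed (simp add: s)
  next
    case False
    then have cpos: "c > 0" unfolding c_def using measure_nonneg[of \<mu> UNIV] by linarith
    define \<mu>' where "\<mu>' = density \<mu> (\<lambda>_. ennreal (1/c))"
    define \<nu>' where "\<nu>' = density \<nu> (\<lambda>_. ennreal (1/c))"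
    have rd: "real_distribution \<mu>'" "real_distribution \<nu>'"
    proof -
      have "prob_space (density m (\<lambda>_. ennreal (1/c)))" if "sets m = sets borel" "emeasure m UNIV = ennreal c" for m :: "real measure"
      proof
        have sp': "space m = UNIV" using sets_eq_imp_space_eq[OF that(1)] by simp
        have "emeasure (density m (\<lambda>_. ennreal (1/c))) (space (density m (\<lambda>_. ennreal (1/c)))) = ennreal (1/c) * ennreal c"
          using that sp' by (simp add: emeasure_density_const)
        also have "\<dots> = 1" using cpos by (simp add: ennreal_mult''[symmetric])
        finally show "emeasure (density m (\<lambda>_. ennreal (1/c))) (space (density m (\<lambda>_. ennreal (1/c)))) = 1" .
      qed
      then show "real_distribution \<mu>'" "real_distribution \<nu>'"
        unfolding real_distribution_def real_distribution_axioms_def \<mu>'_def \<nu>'_def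
        using em s by auto
    qed
    have chd: "char (density m (\<lambda>_. ennreal (1/c))) t = (1/c) * char m t" if "sets m = sets borel" for m t
      unfolding char_def using cpos that
      by (subst integral_density) (auto simp: scaleR_conv_of_real)
    have "char \<mu>' = char \<nu>'" using ch unfolding \<mu>'_def \<nu>'_def by (auto simp: chd s)
    then have eq: "\<mu>' = \<nu>'" by (rule Levy_uniqueness[OF rd])
    show ?thesis
    proof (rule measure_eqI)
      fix A assume A: "A \<in> sets \<mu>"
      have "emeasure \<mu>' A = emeasure \<nu>' A" using eq by simp
      then have "ennreal (1/c) * emeasure \<mu> A = ennreal (1/c) * emeasure \<nu> A"
        unfolding \<mu>'_def \<nu>'_def using A s by (simp add: emeasure_density_const)
      then have "ennreal c * (ennreal (1/c) * emeasure \<mu> A) = ennreal c * (ennreal (1/c) * emeasure \<nu> A)" by simp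
      then show "emeasure \<mu> A = emeasure \<nu> A" using cpos
        by (simp add: mult.assoc[symmetric] ennreal_mult''[symmetric])
    qed (simp add: s)
  qed
qed

lemma dens_step:
  fixes M :: "'a measure" and N :: "'b measure"
  assumes M: "prob_space M" and N: "prob_space N"
    and U[measurable]: "U \<in> borel_measurable M" and U'[measurable]: "U' \<in> borel_measurable N"
    and g[measurable]: "g \<in> borel_measurable M" and g'[measurable]: "g' \<in> borel_measurable N"
    and gb: "\<And>\<omega>. \<omega> \<in> space M \<Longrightarrow> 0 \<le> g \<omega> \<and> g \<omega> \<le> C"
    and gb': "\<And>\<omega>. \<omega> \<in> space N \<Longrightarrow> 0 \<le> g' \<omega> \<and> g' \<omega> \<le> C"
    and ch: "\<And>s. (CLINT \<omega>|M. g \<omega> *\<^sub>R iexp (s * U \<omega>)) = (CLINT \<omega>|N. g' \<omega> *\<^sub>R iexp (s * U' \<omega>))"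
    and B: "B \<in> sets borel"
  shows "(LINT \<omega>|M. g \<omega> * indicator B (U \<omega>)) = (LINT \<omega>|N. g' \<omega> * indicator B (U' \<omega>))"
proof -
  define \<mu> where "\<mu> = distr (density M g) borel U"
  define \<mu>' where "\<mu>' = distr (density N g') borel U'"
  have fin: "finite_measure (distr (density K h) borel V)"
    if K: "prob_space K" and [measurable]: "V \<in> borel_measurable K" "h \<in> borel_measurable K"
      and hb: "\<And>\<omega>. \<omega> \<in> space K \<Longrightarrow> 0 \<le> h \<omega> \<and> h \<omega> \<le> C"
    for K :: "'c measure" and V h
  proof (rule finite_measureI)
    have "emeasure (distr (density K h) borel V) (space (distr (density K h) borel V))
        = emeasure (density K h) (space K)"
      by (simp add: emeasure_distr)
    also have "\<dots> = (\<integral>\<^sup>+ \<omega>. ennreal (h \<omega>) \<partial>K)"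
      by (subst emeasure_density) (auto intro!: nn_integral_cong)
    also have "\<dots> \<le> (\<integral>\<^sup>+ \<omega>. ennreal C \<partial>K)"
      using hb by (intro nn_integral_mono) (auto intro: ennreal_leI)
    also have "\<dots> = ennreal C" using K by (simp add: prob_space.emeasure_space_1)
    finally show "emeasure (distr (density K h) borel V) (space (distr (density K h) borel V)) \<noteq> \<infinity>"
      by (auto simp: top_unique)
  qed
  have chr: "char (distr (density K h) borel V) s = (CLINT \<omega>|K. h \<omega> *\<^sub>R iexp (s * V \<omega>))"
    if [measurable]: "V \<in> borel_measurable K" "h \<in> borel_measurable K"
      and hb: "\<And>\<omega>. \<omega> \<in> space K \<Longrightarrow> 0 \<le> h \<omega>"
    for K :: "'c measure" and V h s
    unfolding char_def using hb
    by (simp add: integral_distr integral_density)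
  have "char \<mu> s = char \<mu>' s" for s
  proof -
    have "char \<mu> s = (CLINT \<omega>|M. g \<omega> *\<^sub>R iexp (s * U \<omega>))"
      unfolding \<mu>_def by (rule chr) (use gb in auto)
    also have "\<dots> = (CLINT \<omega>|N. g' \<omega> *\<^sub>R iexp (s * U' \<omega>))" by (rule ch)
    also have "\<dots> = char \<mu>' s"
      unfolding \<mu>'_def by (rule chr[symmetric]) (use gb' in auto)
    finally show ?thesis .
  qed
  then have eq: "\<mu> = \<mu>'"
    by (intro char_unique_finite ext) (auto simp: \<mu>_def \<mu>'_def intro!: fin M N gb gb')
  have ind: "(LINT x|distr (density K h) borel V. indicator B x :: real) = (LINT \<omega>|K. h \<omega> * indicator B (V \<omega>))"
    if [measurable]: "V \<in> borel_measurable K" "h \<in> borel_measurable K"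
      and hb: "\<And>\<omega>. \<omega> \<in> space K \<Longrightarrow> 0 \<le> h \<omega>"
    for K :: "'c measure" and V h
  proof -
    have "(LINT x|distr (density K h) borel V. indicator B x :: real) = (LINT \<omega>|density K h. indicator B (V \<omega>))"
      by (subst integral_distr) (use B in auto)
    also have "\<dots> = (LINT \<omega>|K. h \<omega> *\<^sub>R indicator B (V \<omega>))"
      by (rule integral_density) (use B hb in auto)
    finally show ?thesis by simp
  qed
  have "(LINT x|\<mu>. indicator B x :: real) = (LINT x|\<mu>'. indicator B x)" using eq by simp
  then show ?thesis unfolding \<mu>_def \<mu>'_def using gb gb' ind[OF U g] ind[OF U' g'] by simp
qed

lemma real_step:
  fixes M :: "'a measure" and N :: "'b measure"
  assumes M: "prob_space M" and N: "prob_space N"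
    and U[measurable]: "U \<in> borel_measurable M" and U'[measurable]: "U' \<in> borel_measurable N"
    and R[measurable]: "R \<in> borel_measurable M" and R'[measurable]: "R' \<in> borel_measurable N"
    and Rb: "\<And>\<omega>. \<omega> \<in> space M \<Longrightarrow> \<bar>R \<omega>\<bar> \<le> 1"
    and Rb': "\<And>\<omega>. \<omega> \<in> space N \<Longrightarrow> \<bar>R' \<omega>\<bar> \<le> 1"
    and h0: "\<And>s. (CLINT \<omega>|M. iexp (s * U \<omega>)) = (CLINT \<omega>|N. iexp (s * U' \<omega>))"
    and hR: "\<And>s. (CLINT \<omega>|M. R \<omega> *\<^sub>R iexp (s * U \<omega>)) = (CLINT \<omega>|N. R' \<omega> *\<^sub>R iexp (s * U' \<omega>))"
    and B[measurable]: "B \<in> sets borel"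
  shows "(LINT \<omega>|M. R \<omega> * indicator B (U \<omega>)) = (LINT \<omega>|N. R' \<omega> * indicator B (U' \<omega>))"
proof -
  interpret M: prob_space M by (rule M)
  interpret N: prob_space N by (rule N)
  have iM1: "integrable M (\<lambda>\<omega>. R \<omega> *\<^sub>R iexp (s * U \<omega>))" for s
    apply (rule M.integrable_const_bound[where B=1])
    subgoal using Rb by (auto simp: norm_exp_i_times)
    subgoal by measurable
    done
  have iM2: "integrable M (\<lambda>\<omega>. iexp (s * U \<omega>))" for s
    apply (rule M.integrable_const_bound[where B=1])
    subgoal by (auto simp: norm_exp_i_times)
    subgoal by measurable
    done
  have iN1: "integrable N (\<lambda>\<omega>. R' \<omega> *\<^sub>R iexp (s * U' \<omega>))" for s
    apply (rule N.integrable_const_bound[where B=1])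
    subgoal using Rb' by (auto simp: norm_exp_i_times)
    subgoal by measurable
    done
  have iN2: "integrable N (\<lambda>\<omega>. iexp (s * U' \<omega>))" for s
    apply (rule N.integrable_const_bound[where B=1])
    subgoal by (auto simp: norm_exp_i_times)
    subgoal by measurable
    done
  have jM1: "integrable M (\<lambda>\<omega>. R \<omega> * indicator B (U \<omega>))"
    apply (rule M.integrable_const_bound[where B=1])
    subgoal using Rb by (auto simp: indicator_def)
    subgoal by measurable
    done
  have jM2: "integrable M (\<lambda>\<omega>. indicator B (U \<omega>) :: real)"
    apply (rule M.integrable_const_bound[where B=1])
    subgoal by (auto simp: indicator_def)
    subgoal by measurable
    done
  have jN1: "integrable N (\<lambda>\<omega>. R' \<omega> * indicator B (U' \<omega>))"
    apply (rule N.integrable_const_bound[where B=1])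
    subgoal using Rb' by (auto simp: indicator_def)
    subgoal by measurable
    done
  have jN2: "integrable N (\<lambda>\<omega>. indicator B (U' \<omega>) :: real)"
    apply (rule N.integrable_const_bound[where B=1])
    subgoal by (auto simp: indicator_def)
    subgoal by measurable
    done
  have e1: "(LINT \<omega>|M. (1::real) * indicator B (U \<omega>)) = (LINT \<omega>|N. 1 * indicator B (U' \<omega>))"
  proof (rule dens_step[OF M N U U', of "\<lambda>_. 1" "\<lambda>_. 1" 1 B])
    fix s show "(CLINT \<omega>|M. (1::real) *\<^sub>R iexp (s * U \<omega>)) = (CLINT \<omega>|N. (1::real) *\<^sub>R iexp (s * U' \<omega>))"
      using h0[of s] by (simp only: scaleR_one)
  next show "(\<lambda>_. 1::real) \<in> borel_measurable M" by simp
  next show "(\<lambda>_. 1::real) \<in> borel_measurable N" by simp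
  qed simp_all
  have e2: "(LINT \<omega>|M. (1 + R \<omega>) * indicator B (U \<omega>)) = (LINT \<omega>|N. (1 + R' \<omega>) * indicator B (U' \<omega>))"
  proof (rule dens_step[OF M N U U', of "\<lambda>\<omega>. 1 + R \<omega>" "\<lambda>\<omega>. 1 + R' \<omega>" 2 B])
    fix s
    have "(CLINT \<omega>|M. (1 + R \<omega>) *\<^sub>R iexp (s * U \<omega>)) = (CLINT \<omega>|M. iexp (s * U \<omega>) + R \<omega> *\<^sub>R iexp (s * U \<omega>))"
      by (simp add: scaleR_add_left)
    also have "\<dots> = (CLINT \<omega>|M. iexp (s * U \<omega>)) + (CLINT \<omega>|M. R \<omega> *\<^sub>R iexp (s * U \<omega>))"
      by (rule Bochner_Integration.integral_add[OF iM2 iM1])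
    also have "\<dots> = (CLINT \<omega>|N. iexp (s * U' \<omega>)) + (CLINT \<omega>|N. R' \<omega> *\<^sub>R iexp (s * U' \<omega>))"
      by (simp only: h0 hR)
    also have "\<dots> = (CLINT \<omega>|N. iexp (s * U' \<omega>) + R' \<omega> *\<^sub>R iexp (s * U' \<omega>))"
      by (rule Bochner_Integration.integral_add[OF iN2 iN1, symmetric])
    also have "\<dots> = (CLINT \<omega>|N. (1 + R' \<omega>) *\<^sub>R iexp (s * U' \<omega>))"
      by (simp add: scaleR_add_left)
    finally show "(CLINT \<omega>|M. (1 + R \<omega>) *\<^sub>R iexp (s * U \<omega>)) = (CLINT \<omega>|N. (1 + R' \<omega>) *\<^sub>R iexp (s * U' \<omega>))" .
  next show "(\<lambda>\<omega>. 1 + R \<omega>) \<in> borel_measurable M" by measurable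
  next show "(\<lambda>\<omega>. 1 + R' \<omega>) \<in> borel_measurable N" by measurable
  next fix \<omega> assume "\<omega> \<in> space M" then show "0 \<le> 1 + R \<omega> \<and> 1 + R \<omega> \<le> 2" using Rb[of \<omega>] by (simp add: abs_le_iff)
  next fix \<omega> assume "\<omega> \<in> space N" then show "0 \<le> 1 + R' \<omega> \<and> 1 + R' \<omega> \<le> 2" using Rb'[of \<omega>] by (simp add: abs_le_iff)
  qed (rule B)
  have "(LINT \<omega>|M. (1 + R \<omega>) * indicator B (U \<omega>)) = (LINT \<omega>|M. indicator B (U \<omega>)) + (LINT \<omega>|M. R \<omega> * indicator B (U \<omega>))"
    unfolding distrib_right by (simp only: mult_1 Bochner_Integration.integral_add[OF jM2 jM1])
  moreover have "(LINT \<omega>|N. (1 + R' \<omega>) * indicator B (U' \<omega>)) = (LINT \<omega>|N. indicator B (U' \<omega>)) + (LINT \<omega>|N. R' \<omega> * indicator B (U' \<omega>))"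
    unfolding distrib_right by (simp only: mult_1 Bochner_Integration.integral_add[OF jN2 jN1])
  ultimately show ?thesis using e1 e2 by simp
qed

lemma bounded_integrable:
  fixes f :: "'a \<Rightarrow> 'b::{banach,second_countable_topology}"
  assumes "prob_space K" "f \<in> borel_measurable K" "\<And>\<omega>. \<omega> \<in> space K \<Longrightarrow> norm (f \<omega>) \<le> C"
  shows "integrable K f"
proof -
  interpret prob_space K by fact
  show ?thesis by (rule integrable_const_bound[where B=C]) (use assms in auto)
qed

lemma cplx_step:
  fixes M :: "'a measure" and N :: "'b measure"
  assumes M: "prob_space M" and N: "prob_space N"
    and U[measurable]: "U \<in> borel_measurable M" and U'[measurable]: "U' \<in> borel_measurable N"
    and V[measurable]: "V \<in> borel_measurable M" and V'[measurable]: "V' \<in> borel_measurable N"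
    and Vb: "\<And>\<omega>. \<omega> \<in> space M \<Longrightarrow> norm (V \<omega>) \<le> 1"
    and Vb': "\<And>\<omega>. \<omega> \<in> space N \<Longrightarrow> norm (V' \<omega>) \<le> 1"
    and h0: "\<And>s. (CLINT \<omega>|M. iexp (s * U \<omega>)) = (CLINT \<omega>|N. iexp (s * U' \<omega>))"
    and h1: "\<And>s. (CLINT \<omega>|M. V \<omega> * iexp (s * U \<omega>)) = (CLINT \<omega>|N. V' \<omega> * iexp (s * U' \<omega>))"
    and h2: "\<And>s. (CLINT \<omega>|M. cnj (V \<omega>) * iexp (s * U \<omega>)) = (CLINT \<omega>|N. cnj (V' \<omega>) * iexp (s * U' \<omega>))"
    and B[measurable]: "B \<in> sets borel"
  shows "(CLINT \<omega>|M. indicator B (U \<omega>) *\<^sub>R V \<omega>) = (CLINT \<omega>|N. indicator B (U' \<omega>) *\<^sub>R V' \<omega>)"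
proof -
  have nb: "norm (iexp x) \<le> 1" for x by (simp add: norm_exp_i_times)
  have Rebound: "\<bar>Re z\<bar> \<le> 1" "\<bar>Im z\<bar> \<le> 1" if "norm z \<le> 1" for z :: complex
    using that abs_Re_le_cmod[of z] abs_Im_le_cmod[of z] by linarith+
  have int1: "integrable K (\<lambda>\<omega>. W \<omega> * iexp (s * X \<omega>))"
    if "prob_space K" "W \<in> borel_measurable K" "X \<in> borel_measurable K" "\<And>\<omega>. \<omega> \<in> space K \<Longrightarrow> norm (W \<omega>) \<le> 1"
    for K :: "'c measure" and W X s
  proof (rule bounded_integrable[where C=1])
    show "(\<lambda>\<omega>. W \<omega> * iexp (s * X \<omega>)) \<in> borel_measurable K" using that by measurable
    fix \<omega> assume "\<omega> \<in> space K" then show "norm (W \<omega> * iexp (s * X \<omega>)) \<le> 1"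
      using that(4)[of \<omega>] by (simp add: norm_mult norm_exp_i_times)
  qed fact
  have reid: "Re z *\<^sub>R w = (z * w + cnj z * w) / 2" for z w :: complex
    by (simp add: complex_eq_iff scaleR_conv_of_real algebra_simps)
  have imid: "Im z *\<^sub>R w = (z * w - cnj z * w) / (2 * \<i>)" for z w :: complex
  proof -
    have "z - cnj z = 2 * \<i> * of_real (Im z)" by (simp add: complex_eq_iff)
    moreover have "z * w - cnj z * w = (z - cnj z) * w" by (simp add: left_diff_distrib)
    ultimately have e: "z * w - cnj z * w = 2 * \<i> * (of_real (Im z) * w)"
      by (simp only: mult.assoc)
    have "(2 * \<i> * (of_real (Im z) * w)) / (2 * \<i>) = of_real (Im z) * w" 
      by (rule nonzero_mult_div_cancel_left) simp
    then show ?thesis unfolding e scaleR_conv_of_real by simp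
  qed
  have cV: "(\<lambda>\<omega>. cnj (V \<omega>)) \<in> borel_measurable M" "(\<lambda>\<omega>. cnj (V' \<omega>)) \<in> borel_measurable N"
    by (rule borel_measurable_continuous_on[OF continuous_on_cnj[OF continuous_on_id] V],
        rule borel_measurable_continuous_on[OF continuous_on_cnj[OF continuous_on_id] V'])
  have re: "(LINT \<omega>|M. Re (V \<omega>) * indicator B (U \<omega>)) = (LINT \<omega>|N. Re (V' \<omega>) * indicator B (U' \<omega>))"
  proof (rule real_step[OF M N U U', of "\<lambda>\<omega>. Re (V \<omega>)" "\<lambda>\<omega>. Re (V' \<omega>)" B])
    fix s
    have "(CLINT \<omega>|M. Re (V \<omega>) *\<^sub>R iexp (s * U \<omega>)) = (CLINT \<omega>|M. (V \<omega> * iexp (s * U \<omega>) + cnj (V \<omega>) * iexp (s * U \<omega>)) / 2)"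
      by (simp only: reid)
    also have "\<dots> = ((CLINT \<omega>|M. V \<omega> * iexp (s * U \<omega>)) + (CLINT \<omega>|M. cnj (V \<omega>) * iexp (s * U \<omega>))) / 2"
      using int1[OF M V U Vb, of s] int1[OF M cV(1) U, of s] Vb by simp
    also have "\<dots> = ((CLINT \<omega>|N. V' \<omega> * iexp (s * U' \<omega>)) + (CLINT \<omega>|N. cnj (V' \<omega>) * iexp (s * U' \<omega>))) / 2"
      by (simp only: h1 h2)
    also have "\<dots> = (CLINT \<omega>|N. (V' \<omega> * iexp (s * U' \<omega>) + cnj (V' \<omega>) * iexp (s * U' \<omega>)) / 2)"
      using int1[OF N V' U' Vb', of s] int1[OF N cV(2) U', of s] Vb' by simp
    also have "\<dots> = (CLINT \<omega>|N. Re (V' \<omega>) *\<^sub>R iexp (s * U' \<omega>))"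
      by (simp only: reid)
    finally show "(CLINT \<omega>|M. Re (V \<omega>) *\<^sub>R iexp (s * U \<omega>)) = (CLINT \<omega>|N. Re (V' \<omega>) *\<^sub>R iexp (s * U' \<omega>))" .
  next show "(\<lambda>\<omega>. Re (V \<omega>)) \<in> borel_measurable M" by measurable
  next show "(\<lambda>\<omega>. Re (V' \<omega>)) \<in> borel_measurable N" by measurable
  next fix \<omega> assume "\<omega> \<in> space M" then show "\<bar>Re (V \<omega>)\<bar> \<le> 1" using Vb Rebound by blast
  next fix \<omega> assume "\<omega> \<in> space N" then show "\<bar>Re (V' \<omega>)\<bar> \<le> 1" using Vb' Rebound by blast
  qed (rule h0, rule B)
  have im: "(LINT \<omega>|M. Im (V \<omega>) * indicator B (U \<omega>)) = (LINT \<omega>|N. Im (V' \<omega>) * indicator B (U' \<omega>))"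
  proof (rule real_step[OF M N U U', of "\<lambda>\<omega>. Im (V \<omega>)" "\<lambda>\<omega>. Im (V' \<omega>)" B])
    fix s
    have "(CLINT \<omega>|M. Im (V \<omega>) *\<^sub>R iexp (s * U \<omega>)) = (CLINT \<omega>|M. (V \<omega> * iexp (s * U \<omega>) - cnj (V \<omega>) * iexp (s * U \<omega>)) / (2 * \<i>))"
      by (simp only: imid)
    also have "\<dots> = ((CLINT \<omega>|M. V \<omega> * iexp (s * U \<omega>)) - (CLINT \<omega>|M. cnj (V \<omega>) * iexp (s * U \<omega>))) / (2 * \<i>)"
      using int1[OF M V U Vb, of s] int1[OF M cV(1) U, of s] Vb by simp
    also have "\<dots> = ((CLINT \<omega>|N. V' \<omega> * iexp (s * U' \<omega>)) - (CLINT \<omega>|N. cnj (V' \<omega>) * iexp (s * U' \<omega>))) / (2 * \<i>)"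
      by (simp only: h1 h2)
    also have "\<dots> = (CLINT \<omega>|N. (V' \<omega> * iexp (s * U' \<omega>) - cnj (V' \<omega>) * iexp (s * U' \<omega>)) / (2 * \<i>))"
      using int1[OF N V' U' Vb', of s] int1[OF N cV(2) U', of s] Vb' by simp
    also have "\<dots> = (CLINT \<omega>|N. Im (V' \<omega>) *\<^sub>R iexp (s * U' \<omega>))"
      by (simp only: imid)
    finally show "(CLINT \<omega>|M. Im (V \<omega>) *\<^sub>R iexp (s * U \<omega>)) = (CLINT \<omega>|N. Im (V' \<omega>) *\<^sub>R iexp (s * U' \<omega>))" .
  next show "(\<lambda>\<omega>. Im (V \<omega>)) \<in> borel_measurable M" by measurable
  next show "(\<lambda>\<omega>. Im (V' \<omega>)) \<in> borel_measurable N" by measurable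
  next fix \<omega> assume "\<omega> \<in> space M" then show "\<bar>Im (V \<omega>)\<bar> \<le> 1" using Vb Rebound by blast
  next fix \<omega> assume "\<omega> \<in> space N" then show "\<bar>Im (V' \<omega>)\<bar> \<le> 1" using Vb' Rebound by blast
  qed (rule h0, rule B)
  have int2: "integrable K (\<lambda>\<omega>. indicator B (X \<omega>) *\<^sub>R W \<omega>)"
    if "prob_space K" "W \<in> borel_measurable K" "X \<in> borel_measurable K" "\<And>\<omega>. \<omega> \<in> space K \<Longrightarrow> norm (W \<omega>) \<le> 1"
    for K :: "'c measure" and W :: "'c \<Rightarrow> complex" and X
  proof (rule bounded_integrable[where C=1])
    show "(\<lambda>\<omega>. indicator B (X \<omega>) *\<^sub>R W \<omega>) \<in> borel_measurable K" using that by measurable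
    fix \<omega> assume "\<omega> \<in> space K" then show "norm (indicator B (X \<omega>) *\<^sub>R W \<omega>) \<le> 1"
      using that(4)[of \<omega>] by (simp add: indicator_def)
  qed fact
  show ?thesis
  proof (rule complex_eqI)
    show "Re (CLINT \<omega>|M. indicator B (U \<omega>) *\<^sub>R V \<omega>) = Re (CLINT \<omega>|N. indicator B (U' \<omega>) *\<^sub>R V' \<omega>)"
      using integral_Re[OF int2[OF M V U Vb]] integral_Re[OF int2[OF N V' U' Vb']] re
      by (simp add: mult.commute)
    show "Im (CLINT \<omega>|M. indicator B (U \<omega>) *\<^sub>R V \<omega>) = Im (CLINT \<omega>|N. indicator B (U' \<omega>) *\<^sub>R V' \<omega>)"
      using integral_Im[OF int2[OF M V U Vb]] integral_Im[OF int2[OF N V' U' Vb']] im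
      by (simp add: mult.commute)
  qed
qed

lemma borel_measurable_cnj'[measurable]:
  fixes f :: "'a \<Rightarrow> complex"
  shows "f \<in> borel_measurable M \<Longrightarrow> (\<lambda>x. cnj (f x)) \<in> borel_measurable M"
  by (rule borel_measurable_continuous_on[OF continuous_on_cnj[OF continuous_on_id]])

lemma prod_indicator_eq:
  fixes X :: "'j \<Rightarrow> 'a \<Rightarrow> real"
  assumes "finite J"
  shows "(\<Prod>j\<in>J. indicator (A j) (X j \<omega>) :: real) = indicator {\<omega>. \<forall>j\<in>J. X j \<omega> \<in> A j} \<omega>"
proof (cases "\<forall>j\<in>J. X j \<omega> \<in> A j")
  case True then show ?thesis by (simp add: indicator_def)
next
  case False
  then obtain j where "j \<in> J" "X j \<omega> \<notin> A j" by blast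
  then show ?thesis using assms by (auto simp: indicator_def prod_zero_iff)
qed

lemma rect_to_distr:
  fixes M :: "'a measure" and N :: "'b measure" and X :: "'j \<Rightarrow> 'a \<Rightarrow> real" and Y :: "'j \<Rightarrow> 'b \<Rightarrow> real"
  assumes M: "prob_space M" and N: "prob_space N" and J: "finite J"
    and X[measurable]: "\<And>j. X j \<in> borel_measurable M" and Y[measurable]: "\<And>j. Y j \<in> borel_measurable N"
    and rect: "\<And>A. (\<And>j. j \<in> J \<Longrightarrow> A j \<in> sets borel) \<Longrightarrow>
        (LINT \<omega>|M. (\<Prod>j\<in>J. indicator (A j) (X j \<omega>) :: real)) = (LINT \<omega>|N. (\<Prod>j\<in>J. indicator (A j) (Y j \<omega>)))"
  shows "distr M (PiM J (\<lambda>_. borel)) (\<lambda>\<omega>. \<lambda>j\<in>J. X j \<omega>) = distr N (PiM J (\<lambda>_. borel)) (\<lambda>\<omega>. \<lambda>j\<in>J. Y j \<omega>)"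
proof -
  interpret M: prob_space M by (rule M)
  interpret N: prob_space N by (rule N)
  have key: "emeasure (distr K (PiM J (\<lambda>_. borel)) (\<lambda>\<omega>. \<lambda>j\<in>J. Z j \<omega>)) (Pi\<^sub>E J A)
      = ennreal (LINT \<omega>|K. (\<Prod>j\<in>J. indicator (A j) (Z j \<omega>)))"
    if K: "prob_space K" and Z[measurable]: "\<And>j. Z j \<in> borel_measurable K" and A: "\<And>j. j \<in> J \<Longrightarrow> A j \<in> sets borel"
    for K and Z :: "'j \<Rightarrow> _ \<Rightarrow> real" and A
  proof -
    interpret K: prob_space K by (rule K)
    have S: "{\<omega> \<in> space K. \<forall>j\<in>J. Z j \<omega> \<in> A j} \<in> sets K"
      using J A by measurable
    have "(\<lambda>\<omega>. \<lambda>j\<in>J. Z j \<omega>) -` Pi\<^sub>E J A \<inter> space K = {\<omega> \<in> space K. \<forall>j\<in>J. Z j \<omega> \<in> A j}"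
      by (auto simp: PiE_iff)
    then have "emeasure (distr K (PiM J (\<lambda>_. borel)) (\<lambda>\<omega>. \<lambda>j\<in>J. Z j \<omega>)) (Pi\<^sub>E J A)
       = emeasure K {\<omega> \<in> space K. \<forall>j\<in>J. Z j \<omega> \<in> A j}"
      using A by (subst emeasure_distr) (auto intro!: sets_PiM_I_finite J)
    also have "\<dots> = ennreal (measure K {\<omega> \<in> space K. \<forall>j\<in>J. Z j \<omega> \<in> A j})"
      by (rule K.emeasure_eq_measure)
    also have "measure K {\<omega> \<in> space K. \<forall>j\<in>J. Z j \<omega> \<in> A j} = (LINT \<omega>|K. indicator {\<omega> \<in> space K. \<forall>j\<in>J. Z j \<omega> \<in> A j} \<omega>)"
      using S by simp
    also have "\<dots> = (LINT \<omega>|K. (\<Prod>j\<in>J. indicator (A j) (Z j \<omega>)))"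
      by (intro Bochner_Integration.integral_cong refl) (simp add: prod_indicator_eq[OF J] split: split_indicator)
    finally show ?thesis .
  qed
  show ?thesis
  proof (rule measure_eqI_PiM_finite[where I=J and M="\<lambda>_. borel" and A="\<lambda>_. Pi\<^sub>E J (\<lambda>_. UNIV)"])
    fix A :: "'j \<Rightarrow> real set" assume A: "\<And>i. i \<in> J \<Longrightarrow> A i \<in> sets borel"
    show "emeasure (distr M (PiM J (\<lambda>_. borel)) (\<lambda>\<omega>. \<lambda>j\<in>J. X j \<omega>)) (Pi\<^sub>E J A) =
          emeasure (distr N (PiM J (\<lambda>_. borel)) (\<lambda>\<omega>. \<lambda>j\<in>J. Y j \<omega>)) (Pi\<^sub>E J A)"
      using key[of M X A, OF M X A] key[of N Y A, OF N Y A] rect[of A, OF A] by simp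
  next
    show "range (\<lambda>_. Pi\<^sub>E J (\<lambda>_. UNIV)) \<subseteq> prod_algebra J (\<lambda>_. borel)"
      using J by (auto intro!: prod_algebraI_finite)
  next
    show "(\<Union>i::nat. Pi\<^sub>E J (\<lambda>_. UNIV)) = space (PiM J (\<lambda>_. borel :: real measure))"
      by (simp add: space_PiM)
  next
    fix i :: nat
    show "emeasure (distr M (PiM J (\<lambda>_. borel)) (\<lambda>\<omega>. \<lambda>j\<in>J. X j \<omega>)) (Pi\<^sub>E J (\<lambda>_. UNIV)) \<noteq> \<infinity>"
      using key[of M X "\<lambda>_. UNIV", OF M X] by simp
  qed (simp_all add: J)
qed

lemma iexp_add: "iexp a * iexp b = iexp (a + b)"
  by (simp add: exp_add[symmetric] distrib_left)

lemma cnj_iexp: "cnj (iexp a) = iexp (- a)"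
  by (simp add: exp_cnj)

lemma sum_delta_mult:
  fixes Z :: "'j \<Rightarrow> real"
  assumes "finite F" "j \<in> F"
  shows "(\<Sum>i\<in>F. (if i = j then s else 0) * Z i) = s * Z j"
proof -
  have "(\<Sum>i\<in>F. (if i = j then s else 0) * Z i) = (\<Sum>i\<in>F. if i = j then s * Z j else 0)"
    by (intro sum.cong) auto
  also have "\<dots> = s * Z j" using assms by simp
  finally show ?thesis .
qed

lemma sum_split_upd:
  fixes Z :: "'j \<Rightarrow> real"
  assumes "finite J" "j \<in> J" "j \<notin> S"
  shows "(\<Sum>i\<in>J - S. (t(j := s)) i * Z i) = s * Z j + (\<Sum>i\<in>J - insert j S. t i * Z i)"
proof -
  have e: "J - S = insert j (J - insert j S)" using assms by auto
  have "(\<Sum>i\<in>J - S. (t(j := s)) i * Z i) = s * Z j + (\<Sum>i\<in>J - insert j S. (t(j := s)) i * Z i)"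
    unfolding e using assms by (subst sum.insert) auto
  also have "(\<Sum>i\<in>J - insert j S. (t(j := s)) i * Z i) = (\<Sum>i\<in>J - insert j S. t i * Z i)"
    by (intro sum.cong) auto
  finally show ?thesis .
qed

lemma norm_prod_ind_le:
  "norm ((\<Prod>i\<in>S. indicator (A i) (Z i) :: real) *\<^sub>R iexp x) \<le> 1"
proof -
  have "\<bar>\<Prod>i\<in>S. indicator (A i) (Z i) :: real\<bar> \<le> 1"
    unfolding abs_prod by (intro prod_le_1) (auto simp: indicator_def)
  then show ?thesis by (simp add: norm_exp_i_times)
qed

lemma cramer_wold:
  fixes M :: "'a measure" and N :: "'b measure" and X :: "'j \<Rightarrow> 'a \<Rightarrow> real" and Y :: "'j \<Rightarrow> 'b \<Rightarrow> real"
  assumes M: "prob_space M" and N: "prob_space N" and J: "finite J"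
    and X[measurable]: "\<And>j. X j \<in> borel_measurable M" and Y[measurable]: "\<And>j. Y j \<in> borel_measurable N"
    and ch: "\<And>t. (CLINT \<omega>|M. iexp (\<Sum>j\<in>J. t j * X j \<omega>)) = (CLINT \<omega>|N. iexp (\<Sum>j\<in>J. t j * Y j \<omega>))"
  shows "distr M (PiM J (\<lambda>_. borel)) (\<lambda>\<omega>. \<lambda>j\<in>J. X j \<omega>) = distr N (PiM J (\<lambda>_. borel)) (\<lambda>\<omega>. \<lambda>j\<in>J. Y j \<omega>)"
proof -
  define \<Phi>M where "\<Phi>M S A t = (CLINT \<omega>|M. (\<Prod>i\<in>S. indicator (A i) (X i \<omega>) :: real) *\<^sub>R iexp (\<Sum>i\<in>J - S. t i * X i \<omega>))"
    for S A t
  define \<Phi>N where "\<Phi>N S A t = (CLINT \<omega>|N. (\<Prod>i\<in>S. indicator (A i) (Y i \<omega>) :: real) *\<^sub>R iexp (\<Sum>i\<in>J - S. t i * Y i \<omega>))"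
    for S A t
  have main: "\<forall>A t. (\<forall>i\<in>S. A i \<in> sets borel) \<longrightarrow> \<Phi>M S A t = \<Phi>N S A t" if "S \<subseteq> J" for S
    using finite_subset[OF that J] that
  proof (induction S rule: finite_induct)
    case empty
    show ?case unfolding \<Phi>M_def \<Phi>N_def using ch by simp
  next
    case (insert j S)
    then have jJ: "j \<in> J" and SJ: "S \<subseteq> J" and jS: "j \<notin> S" by auto
    have IH: "\<Phi>M S A t = \<Phi>N S A t" if "\<And>i. i \<in> S \<Longrightarrow> A i \<in> sets borel" for A t
      using insert.IH[OF SJ] that by blast
    show ?case
    proof (intro allI impI)
      fix A :: "'j \<Rightarrow> real set" and t assume A: "\<forall>i\<in>insert j S. A i \<in> sets borel"
      then have AS: "\<And>i. i \<in> S \<Longrightarrow> A i \<in> sets borel" and Aj: "A j \<in> sets borel" by auto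
      define VM where "VM \<omega> = (\<Prod>i\<in>S. indicator (A i) (X i \<omega>) :: real) *\<^sub>R iexp (\<Sum>i\<in>J - insert j S. t i * X i \<omega>)" for \<omega>
      define VN where "VN \<omega> = (\<Prod>i\<in>S. indicator (A i) (Y i \<omega>) :: real) *\<^sub>R iexp (\<Sum>i\<in>J - insert j S. t i * Y i \<omega>)" for \<omega>
      have VMm: "VM \<in> borel_measurable M" unfolding VM_def using AS by measurable
      have VNm: "VN \<in> borel_measurable N" unfolding VN_def using AS by measurable
      have "(CLINT \<omega>|M. indicator (A j) (X j \<omega>) *\<^sub>R VM \<omega>) = (CLINT \<omega>|N. indicator (A j) (Y j \<omega>) *\<^sub>R VN \<omega>)"
      proof (rule cplx_step[OF M N X Y VMm VNm _ _ _ _ _ Aj])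
        show "norm (VM \<omega>) \<le> 1" for \<omega> unfolding VM_def by (rule norm_prod_ind_le)
        show "norm (VN \<omega>) \<le> 1" for \<omega> unfolding VN_def by (rule norm_prod_ind_le)
      next
        fix s
        define t0 where "t0 = (\<lambda>i. if i = j then s else 0::real)"
        have "(CLINT \<omega>|M. iexp (s * X j \<omega>)) = \<Phi>M S (\<lambda>_. UNIV) t0"
          unfolding \<Phi>M_def t0_def using J jJ jS by (simp add: sum_delta_mult)
        also have "\<dots> = \<Phi>N S (\<lambda>_. UNIV) t0" by (rule IH) simp
        also have "\<dots> = (CLINT \<omega>|N. iexp (s * Y j \<omega>))"
          unfolding \<Phi>N_def t0_def using J jJ jS by (simp add: sum_delta_mult)
        finally show "(CLINT \<omega>|M. iexp (s * X j \<omega>)) = (CLINT \<omega>|N. iexp (s * Y j \<omega>))" .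
      next
        fix s
        have ptM: "VM \<omega> * iexp (s * X j \<omega>) = (\<Prod>i\<in>S. indicator (A i) (X i \<omega>) :: real) *\<^sub>R iexp (\<Sum>i\<in>J - S. (t(j := s)) i * X i \<omega>)" for \<omega>
          unfolding VM_def sum_split_upd[OF J jJ jS] mult_scaleR_left iexp_add by (simp only: add.commute)
        have ptN: "VN \<omega> * iexp (s * Y j \<omega>) = (\<Prod>i\<in>S. indicator (A i) (Y i \<omega>) :: real) *\<^sub>R iexp (\<Sum>i\<in>J - S. (t(j := s)) i * Y i \<omega>)" for \<omega>
          unfolding VN_def sum_split_upd[OF J jJ jS] mult_scaleR_left iexp_add by (simp only: add.commute)
        have "(CLINT \<omega>|M. VM \<omega> * iexp (s * X j \<omega>)) = \<Phi>M S A (t(j := s))"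
          unfolding \<Phi>M_def by (simp only: ptM)
        also have "\<dots> = \<Phi>N S A (t(j := s))" by (rule IH[OF AS])
        also have "\<dots> = (CLINT \<omega>|N. VN \<omega> * iexp (s * Y j \<omega>))"
          unfolding \<Phi>N_def by (simp only: ptN)
        finally show "(CLINT \<omega>|M. VM \<omega> * iexp (s * X j \<omega>)) = (CLINT \<omega>|N. VN \<omega> * iexp (s * Y j \<omega>))" .
      next
        fix s
        define t' where "t' = (\<lambda>i. - t i)"
        have cM: "cnj (VM \<omega>) = (\<Prod>i\<in>S. indicator (A i) (X i \<omega>) :: real) *\<^sub>R iexp (\<Sum>i\<in>J - insert j S. t' i * X i \<omega>)" for \<omega>
        proof -
          have "- (\<Sum>i\<in>J - insert j S. t i * X i \<omega>) = (\<Sum>i\<in>J - insert j S. t' i * X i \<omega>)"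
            unfolding t'_def by (simp add: sum_negf)
          then show ?thesis unfolding VM_def complex_cnj_scaleR cnj_iexp by simp
        qed
        have cN: "cnj (VN \<omega>) = (\<Prod>i\<in>S. indicator (A i) (Y i \<omega>) :: real) *\<^sub>R iexp (\<Sum>i\<in>J - insert j S. t' i * Y i \<omega>)" for \<omega>
        proof -
          have "- (\<Sum>i\<in>J - insert j S. t i * Y i \<omega>) = (\<Sum>i\<in>J - insert j S. t' i * Y i \<omega>)"
            unfolding t'_def by (simp add: sum_negf)
          then show ?thesis unfolding VN_def complex_cnj_scaleR cnj_iexp by simp
        qed
        have ptM: "cnj (VM \<omega>) * iexp (s * X j \<omega>) = (\<Prod>i\<in>S. indicator (A i) (X i \<omega>) :: real) *\<^sub>R iexp (\<Sum>i\<in>J - S. (t'(j := s)) i * X i \<omega>)" for \<omega>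
          unfolding cM sum_split_upd[OF J jJ jS] mult_scaleR_left iexp_add by (simp only: add.commute)
        have ptN: "cnj (VN \<omega>) * iexp (s * Y j \<omega>) = (\<Prod>i\<in>S. indicator (A i) (Y i \<omega>) :: real) *\<^sub>R iexp (\<Sum>i\<in>J - S. (t'(j := s)) i * Y i \<omega>)" for \<omega>
          unfolding cN sum_split_upd[OF J jJ jS] mult_scaleR_left iexp_add by (simp only: add.commute)
        have "(CLINT \<omega>|M. cnj (VM \<omega>) * iexp (s * X j \<omega>)) = \<Phi>M S A (t'(j := s))"
          unfolding \<Phi>M_def by (simp only: ptM)
        also have "\<dots> = \<Phi>N S A (t'(j := s))" by (rule IH[OF AS])
        also have "\<dots> = (CLINT \<omega>|N. cnj (VN \<omega>) * iexp (s * Y j \<omega>))"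
          unfolding \<Phi>N_def by (simp only: ptN)
        finally show "(CLINT \<omega>|M. cnj (VM \<omega>) * iexp (s * X j \<omega>)) = (CLINT \<omega>|N. cnj (VN \<omega>) * iexp (s * Y j \<omega>))" .
      qed
      moreover have "\<Phi>M (insert j S) A t = (CLINT \<omega>|M. indicator (A j) (X j \<omega>) *\<^sub>R VM \<omega>)"
        unfolding \<Phi>M_def VM_def using insert.hyps by simp
      moreover have "\<Phi>N (insert j S) A t = (CLINT \<omega>|N. indicator (A j) (Y j \<omega>) *\<^sub>R VN \<omega>)"
        unfolding \<Phi>N_def VN_def using insert.hyps by simp
      ultimately show "\<Phi>M (insert j S) A t = \<Phi>N (insert j S) A t" by simp
    qed
  qed
  show ?thesis
  proof (rule rect_to_distr[OF M N J X Y])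
    fix A :: "'j \<Rightarrow> real set" assume A: "\<And>j. j \<in> J \<Longrightarrow> A j \<in> sets borel"
    have "\<Phi>M J A (\<lambda>_. 0) = \<Phi>N J A (\<lambda>_. 0)" using main[OF order_refl] A by blast
    then show "(LINT \<omega>|M. (\<Prod>j\<in>J. indicator (A j) (X j \<omega>) :: real)) = (LINT \<omega>|N. (\<Prod>j\<in>J. indicator (A j) (Y j \<omega>)))"
      unfolding \<Phi>M_def \<Phi>N_def by (simp del: of_real_prod add: scaleR_conv_of_real)
  qed
qed

lemma normal_second_moment:
  assumes M: "prob_space M" and s: "0 < \<sigma>" and D: "distributed M lborel Y (normal_density 0 \<sigma>)"
  shows "integrable M (\<lambda>\<omega>. (Y \<omega>)\<^sup>2)" "(LINT \<omega>|M. (Y \<omega>)\<^sup>2) = \<sigma>\<^sup>2"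
proof -
  have "integrable lborel (\<lambda>x. normal_density 0 \<sigma> x * (x - 0)^2)"
    by (rule integrable_normal_moment[OF s])
  then show "integrable M (\<lambda>\<omega>. (Y \<omega>)\<^sup>2)"
    using distributed_integrable[OF D, of "\<lambda>x. x\<^sup>2"] by simp
  have "(LINT x|lborel. normal_density 0 \<sigma> x * (x - 0)^(2*1)) = fact (2 * 1) / ((2 / \<sigma>\<^sup>2)^1 * fact 1)"
    by (rule integral_normal_moment_even[OF s])
  then have "(LINT x|lborel. normal_density 0 \<sigma> x * x\<^sup>2) = \<sigma>\<^sup>2" using s by simp
  then show "(LINT \<omega>|M. (Y \<omega>)\<^sup>2) = \<sigma>\<^sup>2"
    using distributed_integral[OF D, of "\<lambda>x. x\<^sup>2"] by simp
qed

lemma normal_char_one: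
  assumes M: "prob_space M" and s: "0 < \<sigma>" and D: "distributed M lborel Y (normal_density 0 \<sigma>)"
  shows "(CLINT \<omega>|M. iexp (Y \<omega>)) = exp (- (\<sigma>\<^sup>2) / 2)"
proof -
  interpret prob_space M by (rule M)
  have D': "distributed M lborel (\<lambda>x. (Y x - 0) / \<sigma>) std_normal_density"
    using normal_standard_normal_convert[OF s] D by blast
  have Ym[measurable]: "Y \<in> borel_measurable M" using D by (auto simp: distributed_def)
  have "distr M lborel (\<lambda>x. (Y x - 0) / \<sigma>) = std_normal_distribution"
    using D' by (simp add: distributed_def)
  then have "char std_normal_distribution \<sigma> = (CLINT x|distr M lborel (\<lambda>x. (Y x - 0) / \<sigma>). iexp (\<sigma> * x))"
    by (simp add: char_def)
  also have "\<dots> = (CLINT \<omega>|M. iexp (\<sigma> * ((Y \<omega> - 0) / \<sigma>)))"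
    by (subst integral_distr) auto
  also have "\<dots> = (CLINT \<omega>|M. iexp (Y \<omega>))" using s by simp
  finally show ?thesis by (simp add: char_std_normal_distribution)
qed

lemma char_centered_gaussian:
  assumes M: "prob_space M" and G: "centered_gaussian_rv M Y"
  shows "integrable M (\<lambda>\<omega>. (Y \<omega>)\<^sup>2)" "(CLINT \<omega>|M. iexp (Y \<omega>)) = exp (- (LINT \<omega>|M. (Y \<omega>)\<^sup>2) / 2)"
proof -
  interpret prob_space M by (rule M)
  have Ym[measurable]: "Y \<in> borel_measurable M" using G by (simp add: centered_gaussian_rv_def)
  have "(integrable M (\<lambda>\<omega>. (Y \<omega>)\<^sup>2)) \<and> (CLINT \<omega>|M. iexp (Y \<omega>)) = exp (- (LINT \<omega>|M. (Y \<omega>)\<^sup>2) / 2)"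
  proof (cases "AE \<omega> in M. Y \<omega> = 0")
    case True
    have i: "integrable M (\<lambda>\<omega>. (Y \<omega>)\<^sup>2) = integrable M (\<lambda>\<omega>. 0::real)"
      by (rule integrable_cong_AE) (use True in auto)
    have a: "(LINT \<omega>|M. (Y \<omega>)\<^sup>2) = (LINT \<omega>|M. 0)"
      by (rule integral_cong_AE) (use True in auto)
    have b: "(CLINT \<omega>|M. iexp (Y \<omega>)) = (CLINT \<omega>|M. 1)"
      by (rule integral_cong_AE) (use True in auto)
    show ?thesis using i a b by (simp add: prob_space)
  next
    case False
    then obtain \<sigma> where s: "\<sigma> > 0" and D: "distributed M lborel Y (normal_density 0 \<sigma>)"
      using G by (auto simp: centered_gaussian_rv_def)
    show ?thesis using normal_second_moment[OF M s D] normal_char_one[OF M s D] by simp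
  qed
  then show "integrable M (\<lambda>\<omega>. (Y \<omega>)\<^sup>2)" "(CLINT \<omega>|M. iexp (Y \<omega>)) = exp (- (LINT \<omega>|M. (Y \<omega>)\<^sup>2) / 2)"
    by auto
qed

lemma combo_char:
  fixes M :: "'a measure" and X :: "'j \<Rightarrow> 'a \<Rightarrow> real"
  assumes M: "prob_space M" and J: "finite J" and X[measurable]: "\<And>j. X j \<in> borel_measurable M"
    and GX: "\<And>c. centered_gaussian_rv M (\<lambda>\<omega>. \<Sum>j\<in>J. c j * X j \<omega>)"
  shows "(CLINT \<omega>|M. iexp (\<Sum>j\<in>J. t j * X j \<omega>)) =
         exp (- (\<Sum>i\<in>J. \<Sum>j\<in>J. t i * t j * (LINT \<omega>|M. X i \<omega> * X j \<omega>)) / 2)"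
proof -
  interpret prob_space M by (rule M)
  have sqi: "integrable M (\<lambda>\<omega>. (X i \<omega>)\<^sup>2)" if i: "i \<in> J" for i
  proof -
    have "integrable M (\<lambda>\<omega>. (\<Sum>j\<in>J. (if j = i then 1 else 0) * X j \<omega>)\<^sup>2)"
      by (rule char_centered_gaussian(1)[OF M GX])
    then show ?thesis using J i by (simp add: sum_delta_mult)
  qed
  have ij: "integrable M (\<lambda>\<omega>. X i \<omega> * X j \<omega>)" if "i \<in> J" "j \<in> J" for i j
  proof (rule Bochner_Integration.integrable_bound[OF Bochner_Integration.integrable_add[OF sqi[OF that(1)] sqi[OF that(2)]]])
    show "(\<lambda>\<omega>. X i \<omega> * X j \<omega>) \<in> borel_measurable M" by measurable
    show "AE \<omega> in M. norm (X i \<omega> * X j \<omega>) \<le> norm ((X i \<omega>)\<^sup>2 + (X j \<omega>)\<^sup>2)"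
    proof (intro AE_I2)
      fix \<omega>
      have "0 \<le> (\<bar>X i \<omega>\<bar> - \<bar>X j \<omega>\<bar>)\<^sup>2" by simp
      then have "2 * (\<bar>X i \<omega>\<bar> * \<bar>X j \<omega>\<bar>) \<le> (X i \<omega>)\<^sup>2 + (X j \<omega>)\<^sup>2"
        by (simp add: power2_eq_square algebra_simps)
      moreover have "0 \<le> \<bar>X i \<omega>\<bar> * \<bar>X j \<omega>\<bar>" by simp
      ultimately have "\<bar>X i \<omega>\<bar> * \<bar>X j \<omega>\<bar> \<le> (X i \<omega>)\<^sup>2 + (X j \<omega>)\<^sup>2" by linarith
      then show "norm (X i \<omega> * X j \<omega>) \<le> norm ((X i \<omega>)\<^sup>2 + (X j \<omega>)\<^sup>2)"
        by (simp add: abs_mult)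
    qed
  qed
  have exp2: "(\<Sum>j\<in>J. t j * X j \<omega>)\<^sup>2 = (\<Sum>i\<in>J. \<Sum>j\<in>J. t i * t j * (X i \<omega> * X j \<omega>))" for \<omega>
    unfolding power2_eq_square sum_product by (simp add: algebra_simps)
  have "(LINT \<omega>|M. (\<Sum>j\<in>J. t j * X j \<omega>)\<^sup>2) = (LINT \<omega>|M. (\<Sum>i\<in>J. \<Sum>j\<in>J. t i * t j * (X i \<omega> * X j \<omega>)))"
    by (simp only: exp2)
  also have "\<dots> = (\<Sum>i\<in>J. LINT \<omega>|M. (\<Sum>j\<in>J. t i * t j * (X i \<omega> * X j \<omega>)))"
    by (rule Bochner_Integration.integral_sum) (auto intro!: Bochner_Integration.integrable_sum ij)
  also have "\<dots> = (\<Sum>i\<in>J. \<Sum>j\<in>J. t i * t j * (LINT \<omega>|M. X i \<omega> * X j \<omega>))"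
  proof (rule sum.cong[OF refl])
    fix i assume i: "i \<in> J"
    have "(LINT \<omega>|M. (\<Sum>j\<in>J. t i * t j * (X i \<omega> * X j \<omega>))) = (\<Sum>j\<in>J. LINT \<omega>|M. t i * t j * (X i \<omega> * X j \<omega>))"
      by (rule Bochner_Integration.integral_sum) (auto intro!: ij i)
    then show "(LINT \<omega>|M. (\<Sum>j\<in>J. t i * t j * (X i \<omega> * X j \<omega>))) = (\<Sum>j\<in>J. t i * t j * (LINT \<omega>|M. X i \<omega> * X j \<omega>))"
      by simp
  qed
  finally have v: "(LINT \<omega>|M. (\<Sum>j\<in>J. t j * X j \<omega>)\<^sup>2) = (\<Sum>i\<in>J. \<Sum>j\<in>J. t i * t j * (LINT \<omega>|M. X i \<omega> * X j \<omega>))" .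
  show ?thesis using char_centered_gaussian(2)[OF M GX[of t]] v by simp
qed

lemma prodN_facts:
  fixes K :: "nat set" and \<sigma> :: "nat \<Rightarrow> real"
  assumes K: "finite K" and sp: "\<And>k. k \<in> K \<Longrightarrow> 0 < \<sigma> k"
  defines "N \<equiv> PiM K (\<lambda>k. density lborel (normal_density 0 (\<sigma> k)))"
  shows "prob_space N"
    and "\<And>k. k \<in> K \<Longrightarrow> distributed N lborel (\<lambda>f. f k) (normal_density 0 (\<sigma> k))"
    and "prob_space.indep_vars N (\<lambda>_. borel) (\<lambda>k f. f k) K"
proof -
  have P: "\<And>k. k \<in> K \<Longrightarrow> prob_space (density lborel (normal_density 0 (\<sigma> k)))"
    using sp by (simp add: prob_space_normal_density)
  show NP: "prob_space N" unfolding N_def by (rule prob_space_PiM) (rule P)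
  interpret prob_space N by (rule NP)
  have comp: "distr N borel (\<lambda>f. f k) = density lborel (normal_density 0 (\<sigma> k))" if k: "k \<in> K" for k
  proof -
    have "distr N borel (\<lambda>f. f k) = distr N (density lborel (normal_density 0 (\<sigma> k))) (\<lambda>f. f k)"
      by (rule distr_cong) auto
    also have "\<dots> = density lborel (normal_density 0 (\<sigma> k))"
      unfolding N_def by (rule distr_PiM_component[OF P k])
    finally show ?thesis .
  qed
  show "distributed N lborel (\<lambda>f. f k) (normal_density 0 (\<sigma> k))" if k: "k \<in> K" for k
    unfolding distributed_def
  proof (intro conjI)
    show "distr N lborel (\<lambda>f. f k) = density lborel (normal_density 0 (\<sigma> k))"
      using comp[OF k] by (simp add: distr_cong[OF refl sets_lborel refl, of N "\<lambda>f. f k"])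
    show "(\<lambda>f. f k) \<in> measurable N lborel" unfolding N_def using k by simp
  qed simp
  show "indep_vars (\<lambda>_. borel) (\<lambda>k f. f k) K"
  proof (cases "K = {}")
    case True then show ?thesis by (simp add: indep_vars_def indep_sets_def)
  next
    case False
    have rv: "random_variable borel (\<lambda>f. f k)" if "k \<in> K" for k
      unfolding N_def using that by simp
    have "distr N (PiM K (\<lambda>_. borel)) (\<lambda>x. \<lambda>k\<in>K. x k) = distr N (PiM K (\<lambda>_. borel)) (\<lambda>x. x)"
      by (rule distr_cong) (auto simp: N_def space_PiM)
    also have "\<dots> = N"
      by (rule distr_id2) (auto simp: N_def intro!: sets_PiM_cong)
    also have "\<dots> = PiM K (\<lambda>k. distr N borel (\<lambda>f. f k))"
      unfolding N_def by (rule PiM_cong) (simp_all add: comp[unfolded N_def])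
    finally show ?thesis
      using indep_vars_iff_distr_eq_PiM'[OF False rv] by simp
  qed
qed

lemma prodN_char:
  fixes K :: "nat set" and \<sigma> :: "nat \<Rightarrow> real" and a :: "nat \<Rightarrow> real"
  assumes K: "finite K" and sp: "\<And>k. k \<in> K \<Longrightarrow> 0 < \<sigma> k"
  defines "N \<equiv> PiM K (\<lambda>k. density lborel (normal_density 0 (\<sigma> k)))"
  shows "(CLINT f|N. iexp (\<Sum>k\<in>K. a k * f k)) = exp (- (\<Sum>k\<in>K. (a k)\<^sup>2 * (\<sigma> k)\<^sup>2) / 2)"
proof -
  have F1: "prob_space N" unfolding N_def by (rule prodN_facts(1)[OF K sp])
  have F2: "distributed N lborel (\<lambda>f. f k) (normal_density 0 (\<sigma> k))" if "k \<in> K" for k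
    unfolding N_def by (rule prodN_facts(2)[OF K sp that])
  have F3: "prob_space.indep_vars N (\<lambda>_. borel) (\<lambda>k f. f k) K"
    unfolding N_def by (rule prodN_facts(3)[OF K sp])
  interpret prob_space N by (rule F1)
  define K' where "K' = {k\<in>K. a k \<noteq> 0}"
  have K': "finite K'" "K' \<subseteq> K" using K unfolding K'_def by auto
  have s1: "(\<Sum>k\<in>K. a k * f k) = (\<Sum>k\<in>K'. a k * f k)" for f
    by (rule sum.mono_neutral_right[OF K K'(2)]) (auto simp: K'_def)
  have s2: "(\<Sum>k\<in>K. (a k)\<^sup>2 * (\<sigma> k)\<^sup>2) = (\<Sum>k\<in>K'. (a k)\<^sup>2 * (\<sigma> k)\<^sup>2)"
    by (rule sum.mono_neutral_right[OF K K'(2)]) (auto simp: K'_def)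
  show ?thesis
  proof (cases "K' = {}")
    case True
    then show ?thesis unfolding s1 s2 by (simp add: prob_space)
  next
    case False
    have ind: "indep_vars (\<lambda>_. borel) (\<lambda>k f. a k * f k) K'"
      using indep_vars_compose2[OF indep_vars_subset[OF F3 K'(2)], of "\<lambda>k x. a k * x" "\<lambda>_. borel"]
      by simp
    have pos: "0 < \<bar>a k\<bar> * \<sigma> k" if "k \<in> K'" for k
      using that sp K'(2) unfolding K'_def by auto
    have nd: "distributed N lborel (\<lambda>f. a k * f k) (normal_density 0 (\<bar>a k\<bar> * \<sigma> k))" if k: "k \<in> K'" for k
    proof -
      have kK: "k \<in> K" and ak: "a k \<noteq> 0" using k unfolding K'_def by auto
      have "distributed N lborel (\<lambda>f. 0 + a k * f k) (normal_density (0 + a k * 0) (\<bar>a k\<bar> * \<sigma> k))"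
        by (rule normal_density_affine[OF F2[OF kK] sp[OF kK] ak])
      then show ?thesis by simp
    qed
    have D: "distributed N lborel (\<lambda>f. \<Sum>k\<in>K'. a k * f k)
        (normal_density (\<Sum>k\<in>K'. 0) (sqrt (\<Sum>k\<in>K'. (\<bar>a k\<bar> * \<sigma> k)\<^sup>2)))"
      by (rule sum_indep_normal[OF K'(1) False ind pos nd])
    have sq: "(sqrt (\<Sum>k\<in>K'. (\<bar>a k\<bar> * \<sigma> k)\<^sup>2))\<^sup>2 = (\<Sum>k\<in>K'. (a k)\<^sup>2 * (\<sigma> k)\<^sup>2)"
      by (simp add: power_mult_distrib sum_nonneg)
    have spos: "0 < sqrt (\<Sum>k\<in>K'. (\<bar>a k\<bar> * \<sigma> k)\<^sup>2)"
    proof -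
      have "0 < (\<Sum>k\<in>K'. (\<bar>a k\<bar> * \<sigma> k)\<^sup>2)"
        by (rule sum_pos[OF K'(1) False]) (unfold power2_eq_square, rule mult_pos_pos[OF pos pos])
      then show ?thesis by simp
    qed
    have D': "distributed N lborel (\<lambda>f. \<Sum>k\<in>K'. a k * f k) (normal_density 0 (sqrt (\<Sum>k\<in>K'. (\<bar>a k\<bar> * \<sigma> k)\<^sup>2)))"
      using D by simp
    show ?thesis unfolding s1 s2
      using normal_char_one[OF F1 spos D'] sq by simp
  qed
qed

definition hh :: "real \<times> real \<Rightarrow> real" where "hh P = \<bar>fst P\<bar> + \<bar>snd P\<bar>"

definition below :: "real \<times> real \<Rightarrow> real \<times> real \<Rightarrow> bool" where
  "below Q P \<longleftrightarrow> (fst Q = fst P \<and> 0 \<le> snd Q * snd P \<and> \<bar>snd Q\<bar> \<le> \<bar>snd P\<bar>) \<or>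
     (snd Q = 0 \<and> ((0 \<le> fst Q \<and> fst Q \<le> fst P) \<or> (fst P \<le> fst Q \<and> fst Q \<le> 0)))"

lemma hh_river: "river_dist (0,0) P = hh P"
  by (auto simp: river_dist_def hh_def)

lemma below_refl: "below P P"
  by (auto simp: below_def)

lemma below_origin: "below (0,0) P"
  by (auto simp: below_def)

lemma below_origin_iff: "below Q (0,0) \<longleftrightarrow> Q = (0,0)"
  by (cases Q) (auto simp: below_def)

lemma mult_nonneg_cases: "0 \<le> (a::real) * b \<longleftrightarrow> (0 \<le> a \<and> 0 \<le> b) \<or> (a \<le> 0 \<and> b \<le> 0)"
  by (auto simp: zero_le_mult_iff)

lemma below_trans: "below R Q \<Longrightarrow> below Q P \<Longrightarrow> below R P"
  unfolding below_def mult_nonneg_cases by (cases R, cases Q, cases P) (auto simp: abs_if split: if_splits)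

lemma below_chain: "below R P \<Longrightarrow> below Q P \<Longrightarrow> below R Q \<or> below Q R"
  unfolding below_def mult_nonneg_cases by (cases R, cases Q, cases P) (auto simp: abs_if split: if_splits)

lemma below_hh: "below R Q \<Longrightarrow> R \<noteq> Q \<Longrightarrow> hh R < hh Q"
  unfolding below_def mult_nonneg_cases hh_def by (cases R, cases Q) (auto simp: abs_if split: if_splits)

lemma meet_case1a:
  assumes "0 \<le> b * c" "\<bar>b\<bar> \<le> \<bar>c\<bar>"
  shows "hh (a,b) = (hh (a,b) + hh (a,c) - river_dist (a,b) (a,c))/2"
  using assms unfolding mult_nonneg_cases hh_def river_dist_def
  by (auto simp: abs_if split: if_splits)

lemma meet_case1b:
  assumes "0 \<le> b * c" "\<bar>b\<bar> \<le> \<bar>c\<bar>"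
  shows "below (x,y) (a,b) \<and> below (x,y) (a,c) \<longleftrightarrow> below (x,y) (a,b)"
  using assms unfolding below_def mult_nonneg_cases
  by (auto simp: abs_if split: if_splits)

lemma meet_case2a:
  assumes "\<not> 0 \<le> b * c"
  shows "hh (a,0) = (hh (a,b) + hh (a,c) - river_dist (a,b) (a,c))/2"
  using assms unfolding mult_nonneg_cases hh_def river_dist_def
  by (auto simp: abs_if split: if_splits)

lemma meet_case2b:
  assumes "\<not> 0 \<le> b * c"
  shows "below (x,y) (a,b) \<and> below (x,y) (a,c) \<longleftrightarrow> below (x,y) (a,0)"
  using assms unfolding below_def mult_nonneg_cases
  by (auto simp: abs_if split: if_splits)

lemma meet_case3a:
  assumes "a \<noteq> a'" "0 < a * a'" "\<bar>a\<bar> \<le> \<bar>a'\<bar>"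
  shows "hh (a,0) = (hh (a,b) + hh (a',c) - river_dist (a,b) (a',c))/2"
  using assms unfolding hh_def river_dist_def
  by (auto simp: abs_if zero_less_mult_iff split: if_splits)

lemma meet_case3b:
  assumes "a \<noteq> a'" "0 < a * a'" "\<bar>a\<bar> \<le> \<bar>a'\<bar>"
  shows "below (x,y) (a,b) \<and> below (x,y) (a',c) \<longleftrightarrow> below (x,y) (a,0)"
  using assms unfolding below_def mult_nonneg_cases
  by (auto simp: abs_if zero_less_mult_iff split: if_splits)

lemma meet_case4a:
  assumes "a \<noteq> a'" "\<not> 0 < a * a'"
  shows "hh (0,0) = (hh (a,b) + hh (a',c) - river_dist (a,b) (a',c))/2"
  using assms unfolding hh_def river_dist_def
  by (auto simp: abs_if zero_less_mult_iff split: if_splits)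

lemma meet_case4b:
  assumes "a \<noteq> a'" "\<not> 0 < a * a'"
  shows "below (x,y) (a,b) \<and> below (x,y) (a',c) \<longleftrightarrow> below (x,y) (0,0)"
  using assms unfolding below_def mult_nonneg_cases
  by (auto simp: abs_if zero_less_mult_iff split: if_splits)

lemma river_dist_sym: "river_dist P Q = river_dist Q P"
  by (auto simp: river_dist_def abs_minus_commute)

lemma meet_exists:
  fixes P1 P2 :: "real \<times> real"
  shows "\<exists>m. (m = P1 \<or> m = P2 \<or> m = (fst P1, 0) \<or> m = (fst P2, 0) \<or> m = (0,0)) \<and>
     hh m = (hh P1 + hh P2 - river_dist P1 P2)/2 \<and> (\<forall>R. below R P1 \<and> below R P2 \<longleftrightarrow> below R m)"
proof -
  obtain a b where P1: "P1 = (a,b)" by (cases P1)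
  obtain a' c where P2: "P2 = (a',c)" by (cases P2)
  have sw: "(hh P1 + hh P2 - river_dist P1 P2)/2 = (hh P2 + hh P1 - river_dist P2 P1)/2"
    by (simp add: river_dist_sym)
  have swb: "(below R P1 \<and> below R P2) = (below R P2 \<and> below R P1)" for R by blast
  show ?thesis
  proof (cases "a = a'")
    case True
    show ?thesis
    proof (cases "0 \<le> b * c")
      case bc: True
      show ?thesis
      proof (cases "\<bar>b\<bar> \<le> \<bar>c\<bar>")
        case True
        then show ?thesis using meet_case1a[OF bc True, of a] meet_case1b[OF bc True, of _ _ a] \<open>a = a'\<close> P1 P2
          by (intro exI[of _ P1]) auto
      next
        case False
        have cb: "0 \<le> c * b" using bc by (simp add: mult.commute)
        have F: "\<bar>c\<bar> \<le> \<bar>b\<bar>" using False by simp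
        show ?thesis using meet_case1a[OF cb F, of a] meet_case1b[OF cb F, of _ _ a] \<open>a = a'\<close> P1 P2 sw swb
          by (intro exI[of _ P2]) auto
      qed
    next
      case False
      then show ?thesis using meet_case2a[OF False, of a] meet_case2b[OF False, of _ _ a] \<open>a = a'\<close> P1 P2
        by (intro exI[of _ "(a,0)"]) auto
    qed
  next
    case False
    show ?thesis
    proof (cases "0 < a * a'")
      case aa: True
      show ?thesis
      proof (cases "\<bar>a\<bar> \<le> \<bar>a'\<bar>")
        case True
        then show ?thesis using meet_case3a[OF False aa True, of b c] meet_case3b[OF False aa True, of _ _ b c] P1 P2
          by (intro exI[of _ "(a,0)"]) auto
      next
        case F: False
        have F': "a' \<noteq> a" using False by simp
        have aa': "0 < a' * a" using aa by (simp add: mult.commute)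
        have F2: "\<bar>a'\<bar> \<le> \<bar>a\<bar>" using F by simp
        show ?thesis using meet_case3a[OF F' aa' F2, of c b] meet_case3b[OF F' aa' F2, of _ _ c b] P1 P2 sw swb
          by (intro exI[of _ "(a',0)"]) auto
      qed
    next
      case aa: False
      then show ?thesis using meet_case4a[OF False aa, of b c] meet_case4b[OF False aa, of _ _ b c] P1 P2
        by (intro exI[of _ "(0,0)"]) auto
    qed
  qed
qed

definition sbelow :: "(real \<times> real) set \<Rightarrow> real \<times> real \<Rightarrow> (real \<times> real) set" where
  "sbelow V Q = {R \<in> V. below R Q \<and> R \<noteq> Q}"
definition wt :: "(real \<times> real) set \<Rightarrow> real \<times> real \<Rightarrow> real" where
  "wt V Q = hh Q - Max (hh ` sbelow V Q)"
definition anc :: "(real \<times> real) set \<Rightarrow> real \<times> real \<Rightarrow> (real \<times> real) set" where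
  "anc V P = {Q \<in> V - {(0,0)}. below Q P}"

lemma sbelow_ne:
  assumes "finite V" "(0,0) \<in> V" "Q \<noteq> (0,0)"
  shows "finite (sbelow V Q)" "sbelow V Q \<noteq> {}"
  using assms below_origin[of Q] unfolding sbelow_def by auto

lemma sbelow_max:
  assumes "finite V" "(0,0) \<in> V" "Q \<noteq> (0,0)"
  obtains P' where "P' \<in> sbelow V Q" "hh P' = Max (hh ` sbelow V Q)"
proof -
  have "Max (hh ` sbelow V Q) \<in> hh ` sbelow V Q"
    using sbelow_ne[OF assms] by (intro Max_in) auto
  then show ?thesis using that by auto
qed

lemma wt_pos:
  assumes "finite V" "(0,0) \<in> V" "Q \<noteq> (0,0)"
  shows "wt V Q > 0"
proof -
  obtain P' where P': "P' \<in> sbelow V Q" "hh P' = Max (hh ` sbelow V Q)"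
    using sbelow_max[OF assms] by blast
  then have "hh P' < hh Q" using below_hh[of P' Q] unfolding sbelow_def by blast
  then show ?thesis using P' unfolding wt_def by simp
qed

lemma anc_sum:
  assumes V: "finite V" "(0,0) \<in> V"
  shows "P \<in> V \<Longrightarrow> (\<Sum>Q\<in>anc V P. wt V Q) = hh P"
proof (induction "card (anc V P)" arbitrary: P rule: less_induct)
  case less
  have fa: "finite (anc V R)" for R using V unfolding anc_def by auto
  show ?case
  proof (cases "P = (0,0)")
    case True
    then have "anc V P = {}" unfolding anc_def using below_origin_iff by auto
    then show ?thesis using True by (simp add: hh_def)
  next
    case False
    obtain P' where P': "P' \<in> sbelow V P" "hh P' = Max (hh ` sbelow V P)"
      using sbelow_max[OF V False] by blast
    have P'V: "P' \<in> V" and bP': "below P' P" and nP': "P' \<noteq> P" using P'(1) unfolding sbelow_def by auto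
    have maxle: "hh Q \<le> hh P'" if "Q \<in> sbelow V P" for Q
      using that P'(2) sbelow_ne[OF V False] by (auto intro: Max_ge)
    have eq: "anc V P = insert P (anc V P')"
    proof
      show "anc V P \<subseteq> insert P (anc V P')"
      proof
        fix Q assume Q: "Q \<in> anc V P"
        show "Q \<in> insert P (anc V P')"
        proof (cases "Q = P")
          case False
          then have "Q \<in> sbelow V P" using Q unfolding anc_def sbelow_def by auto
          then have le: "hh Q \<le> hh P'" by (rule maxle)
          have "below Q P' \<or> below P' Q" using below_chain[of Q P P'] Q bP' unfolding anc_def by auto
          then have "below Q P'"
          proof
            assume b: "below P' Q"
            show "below Q P'"
            proof (cases "P' = Q")
              case True then show ?thesis by (simp add: below_refl)
            next
              case False then have "hh P' < hh Q" using below_hh[OF b] by simp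
              with le show ?thesis by simp
            qed
          qed
          then show ?thesis using Q unfolding anc_def by auto
        qed simp
      qed
      show "insert P (anc V P') \<subseteq> anc V P"
        using less.prems False below_refl[of P] below_trans[OF _ bP'] unfolding anc_def by auto
    qed
    have notin: "P \<notin> anc V P'"
    proof
      assume "P \<in> anc V P'"
      then have "below P P'" unfolding anc_def by auto
      then have "hh P < hh P'" using below_hh nP' by metis
      moreover have "hh P' < hh P" using below_hh[OF bP' nP'] .
      ultimately show False by simp
    qed
    have "card (anc V P') < card (anc V P)" unfolding eq using notin fa by simp
    then have IH: "(\<Sum>Q\<in>anc V P'. wt V Q) = hh P'" using less.hyps P'V by blast
    have "(\<Sum>Q\<in>anc V P. wt V Q) = wt V P + (\<Sum>Q\<in>anc V P'. wt V Q)"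
      unfolding eq using notin fa by simp
    also have "\<dots> = hh P" using IH P'(2) unfolding wt_def by simp
    finally show ?thesis .
  qed
qed

lemma anc_inter_sum:
  assumes V: "finite V" "(0,0) \<in> V" and proj: "\<And>P. P \<in> V \<Longrightarrow> (fst P, 0) \<in> V"
    and P1: "P1 \<in> V" and P2: "P2 \<in> V"
  shows "(\<Sum>Q\<in>anc V P1 \<inter> anc V P2. wt V Q) = (hh P1 + hh P2 - river_dist P1 P2)/2"
proof -
  obtain m where m: "m = P1 \<or> m = P2 \<or> m = (fst P1, 0) \<or> m = (fst P2, 0) \<or> m = (0,0)"
    and hm: "hh m = (hh P1 + hh P2 - river_dist P1 P2)/2"
    and bm: "\<And>R. below R P1 \<and> below R P2 \<longleftrightarrow> below R m"
    using meet_exists[of P1 P2] by blast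
  have mV: "m \<in> V" using m P1 P2 proj[OF P1] proj[OF P2] V by auto
  have "anc V P1 \<inter> anc V P2 = anc V m" unfolding anc_def using bm by auto
  then show ?thesis using anc_sum[OF V mV] hm by simp
qed

lemma sq_sum_mult:
  fixes x :: "'j \<Rightarrow> real"
  shows "(\<Sum>i\<in>J. x i)\<^sup>2 * c = (\<Sum>i\<in>J. \<Sum>j\<in>J. x i * x j * c)"
  unfolding power2_eq_square sum_product unfolding sum_distrib_right ..

lemma quad_expand:
  fixes t :: "'j \<Rightarrow> real" and s :: "'k \<Rightarrow> real" and I :: "'j \<Rightarrow> 'k set"
  assumes J: "finite J" and K: "finite K" and IK: "\<And>i. I i \<subseteq> K"
  shows "(\<Sum>k\<in>K. (\<Sum>i\<in>J. if k \<in> I i then t i else 0)\<^sup>2 * s k)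
       = (\<Sum>i\<in>J. \<Sum>j\<in>J. t i * t j * (\<Sum>k\<in>I i \<inter> I j. s k))"
proof -
  have "(\<Sum>k\<in>K. (\<Sum>i\<in>J. if k \<in> I i then t i else 0)\<^sup>2 * s k)
      = (\<Sum>k\<in>K. \<Sum>i\<in>J. \<Sum>j\<in>J. (if k \<in> I i \<inter> I j then t i * t j * s k else 0))"
  proof (intro sum.cong refl)
    fix k
    have "(\<Sum>i\<in>J. if k \<in> I i then t i else 0)\<^sup>2 * s k =
        (\<Sum>i\<in>J. \<Sum>j\<in>J. (if k \<in> I i then t i else 0) * (if k \<in> I j then t j else 0) * s k)"
      by (rule sq_sum_mult)
    also have "\<dots> = (\<Sum>i\<in>J. \<Sum>j\<in>J. (if k \<in> I i \<inter> I j then t i * t j * s k else 0))"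
      by (intro sum.cong refl) auto
    finally show "(\<Sum>i\<in>J. if k \<in> I i then t i else 0)\<^sup>2 * s k =
        (\<Sum>i\<in>J. \<Sum>j\<in>J. (if k \<in> I i \<inter> I j then t i * t j * s k else 0))" .
  qed
  also have "\<dots> = (\<Sum>i\<in>J. \<Sum>k\<in>K. \<Sum>j\<in>J. (if k \<in> I i \<inter> I j then t i * t j * s k else 0))"
    by (rule sum.swap)
  also have "\<dots> = (\<Sum>i\<in>J. \<Sum>j\<in>J. \<Sum>k\<in>K. (if k \<in> I i \<inter> I j then t i * t j * s k else 0))"
    by (intro sum.cong refl sum.swap)
  also have "\<dots> = (\<Sum>i\<in>J. \<Sum>j\<in>J. t i * t j * (\<Sum>k\<in>I i \<inter> I j. s k))"
  proof (intro sum.cong refl)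
    fix i j
    have "(\<Sum>k\<in>K. (if k \<in> I i \<inter> I j then t i * t j * s k else 0)) = (\<Sum>k\<in>K \<inter> (I i \<inter> I j). t i * t j * s k)"
      using K by (simp add: sum.inter_restrict)
    also have "K \<inter> (I i \<inter> I j) = I i \<inter> I j" using IK by blast
    finally show "(\<Sum>k\<in>K. (if k \<in> I i \<inter> I j then t i * t j * s k else 0)) = t i * t j * (\<Sum>k\<in>I i \<inter> I j. s k)"
      by (simp add: sum_distrib_left)
  qed
  finally show ?thesis .
qed

lemma lin_regroup:
  fixes t :: "'j \<Rightarrow> real" and f :: "'k \<Rightarrow> real" and I :: "'j \<Rightarrow> 'k set"
  assumes J: "finite J" and K: "finite K" and IK: "\<And>i. I i \<subseteq> K"
  shows "(\<Sum>i\<in>J. t i * (\<Sum>k\<in>I i. f k)) = (\<Sum>k\<in>K. (\<Sum>i\<in>J. if k \<in> I i then t i else 0) * f k)"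
proof -
  have "(\<Sum>i\<in>J. t i * (\<Sum>k\<in>I i. f k)) = (\<Sum>i\<in>J. \<Sum>k\<in>K. if k \<in> I i then t i * f k else 0)"
  proof (intro sum.cong refl)
    fix i
    have "(\<Sum>k\<in>K. if k \<in> I i then t i * f k else 0) = (\<Sum>k\<in>K \<inter> I i. t i * f k)"
      using K by (simp add: sum.inter_restrict)
    also have "K \<inter> I i = I i" using IK by blast
    finally show "t i * (\<Sum>k\<in>I i. f k) = (\<Sum>k\<in>K. if k \<in> I i then t i * f k else 0)"
      by (simp add: sum_distrib_left)
  qed
  also have "\<dots> = (\<Sum>k\<in>K. \<Sum>i\<in>J. if k \<in> I i then t i * f k else 0)" by (rule sum.swap)
  also have "\<dots> = (\<Sum>k\<in>K. (\<Sum>i\<in>J. if k \<in> I i then t i else 0) * f k)"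
  proof (intro sum.cong refl)
    fix k
    have "(\<Sum>i\<in>J. if k \<in> I i then t i else 0) * f k = (\<Sum>i\<in>J. (if k \<in> I i then t i else 0) * f k)"
      by (rule sum_distrib_right)
    also have "\<dots> = (\<Sum>i\<in>J. if k \<in> I i then t i * f k else 0)"
      by (intro sum.cong refl) auto
    finally show "(\<Sum>i\<in>J. if k \<in> I i then t i * f k else 0) = (\<Sum>i\<in>J. if k \<in> I i then t i else 0) * f k" by simp
  qed
  finally show ?thesis .
qed

lemma combo_points:
  fixes B :: "'p \<Rightarrow> 'a \<Rightarrow> real" and A :: "'j \<Rightarrow> 'p"
  assumes J: "finite J"
  shows "(\<Sum>j\<in>J. c j * B (A j) \<omega>) = (\<Sum>P\<in>A ` J. (\<Sum>j\<in>{j\<in>J. A j = P}. c j) * B P \<omega>)"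
proof -
  have "(\<Sum>j\<in>J. c j * B (A j) \<omega>) = (\<Sum>P\<in>A ` J. \<Sum>j\<in>{j\<in>J. A j = P}. c j * B (A j) \<omega>)"
    by (rule sum.image_gen[OF J])
  also have "\<dots> = (\<Sum>P\<in>A ` J. (\<Sum>j\<in>{j\<in>J. A j = P}. c j) * B P \<omega>)"
    by (intro sum.cong refl) (simp add: sum_distrib_right)
  finally show ?thesis .
qed

theorem proposition4p4:
  fixes M :: "'a measure"
    and B :: "real \<times> real \<Rightarrow> 'a \<Rightarrow> real"
    and A :: "nat \<Rightarrow> real \<times> real"
    and n q :: nat
    and ns :: "nat \<Rightarrow> nat"
  assumes gp: "centered_gaussian_process M B"
    and B0: "AE \<omega> in M. B (0, 0) \<omega> = 0"
    and cov: "\<And>X Y. prob_space.expectation M (\<lambda>\<omega>. B X \<omega> * B Y \<omega>)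
                = (river_dist (0, 0) X + river_dist (0, 0) Y - river_dist X Y) / 2"
    and origin: "(0, 0) \<in> A ` {1..n}"
    and proj: "\<And>i. i \<in> {1..n} \<Longrightarrow> (fst (A i), 0) \<in> A ` {1..n}"
    and ns_pos: "\<And>l. l \<in> {1..q} \<Longrightarrow> ns l > 0"
    and ns_sum: "(\<Sum>l=1..q. ns l) = n"
    and const_first: "\<And>l i. l \<in> {1..q} \<Longrightarrow>
           (\<Sum>j=1..l-1. ns j) + 1 \<le> i \<Longrightarrow> i \<le> (\<Sum>j=1..l. ns j) \<Longrightarrow>
           fst (A i) = fst (A ((\<Sum>j=1..l-1. ns j) + 1))"
    and incr_first: "\<And>l. l \<in> {1..<q} \<Longrightarrow>
           fst (A (\<Sum>j=1..l. ns j)) < fst (A ((\<Sum>j=1..l. ns j) + 1))"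
    and mono_second: "\<And>l i. l \<in> {1..q} \<Longrightarrow>
           (\<Sum>j=1..l-1. ns j) + 1 \<le> i \<Longrightarrow> i < (\<Sum>j=1..l. ns j) \<Longrightarrow>
           snd (A i) \<le> snd (A (Suc i))"
  shows "\<exists>(N :: (nat \<Rightarrow> real) measure) (Z :: nat \<Rightarrow> (nat \<Rightarrow> real) \<Rightarrow> real) (I :: nat \<Rightarrow> nat set).
           prob_space N \<and>
           prob_space.indep_vars N (\<lambda>_. borel) Z {1..n-1} \<and>
           (\<forall>k\<in>{1..n-1}. gaussian_rv N (Z k)) \<and>
           (\<forall>i\<in>{1..n}. I i \<subseteq> {1..n-1}) \<and>
           distr M (PiM {1..n} (\<lambda>_. borel)) (\<lambda>\<omega>. \<lambda>i\<in>{1..n}. B (A i) \<omega>)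
             = distr N (PiM {1..n} (\<lambda>_. borel)) (\<lambda>\<omega>. \<lambda>i\<in>{1..n}. \<Sum>k\<in>I i. Z k \<omega>)"
proof -
  have Mp: "prob_space M" and Bm[measurable]: "\<And>t. B t \<in> borel_measurable M"
    and Bg: "\<And>F c. finite F \<Longrightarrow> centered_gaussian_rv M (\<lambda>\<omega>. \<Sum>t\<in>F. c t * B t \<omega>)"
    using gp unfolding centered_gaussian_process_def by auto
  define J where "J = {1..n}"
  define V where "V = A ` {1..n}"
  define Vs where "Vs = V - {(0,0)}"
  have finJ: "finite J" unfolding J_def by simp
  have finV: "finite V" unfolding V_def by simp
  have oV: "(0,0) \<in> V" unfolding V_def by (rule origin)
  have projV: "(fst P, 0) \<in> V" if "P \<in> V" for P
    using that proj unfolding V_def by auto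
  have finVs: "finite Vs" unfolding Vs_def using finV by simp
  have cVs: "card Vs \<le> n - 1"
  proof -
    have "card V \<le> n" unfolding V_def using card_image_le[of "{1..n}" A] by simp
    moreover have "card Vs = card V - 1" unfolding Vs_def using oV finV by (simp add: card_Diff_singleton)
    ultimately show ?thesis by simp
  qed
  define c where "c = card Vs"
  obtain h where h: "bij_betw h {1..c} Vs"
    using ex_bij_betw_nat_finite_1[OF finVs] unfolding c_def by blast
  define K where "K = {1..n-1}"
  have finK: "finite K" unfolding K_def by simp
  have cK: "{1..c} \<subseteq> K" unfolding K_def c_def using cVs by auto
  define \<sigma> where "\<sigma> k = (if k \<in> {1..c} then sqrt (wt V (h k)) else 1)" for k
  define I where "I i = {k \<in> {1..c}. h k \<in> anc V (A i)}" for i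
  define N where "N = PiM K (\<lambda>k. density lborel (normal_density 0 (\<sigma> k)))"
  have hVs: "h k \<in> Vs" if "k \<in> {1..c}" for k using h that by (auto simp: bij_betw_def)
  have wtpos: "0 < wt V (h k)" if "k \<in> {1..c}" for k
    using hVs[OF that] wt_pos[OF finV oV] unfolding Vs_def by auto
  have \<sigma>pos: "0 < \<sigma> k" for k unfolding \<sigma>_def using wtpos by auto
  have \<sigma>sq: "(\<sigma> k)\<^sup>2 = wt V (h k)" if "k \<in> {1..c}" for k
    unfolding \<sigma>_def using that wtpos[OF that] by simp
  have IK: "I i \<subseteq> K" for i unfolding I_def using cK by auto
  have tree: "(\<Sum>k\<in>I i \<inter> I j. (\<sigma> k)\<^sup>2) = (river_dist (0,0) (A i) + river_dist (0,0) (A j) - river_dist (A i) (A j)) / 2"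
    if i: "i \<in> J" and j: "j \<in> J" for i j
  proof -
    let ?S = "anc V (A i) \<inter> anc V (A j)"
    have SVs: "?S \<subseteq> Vs" unfolding anc_def Vs_def by auto
    have II: "I i \<inter> I j = {k \<in> {1..c}. h k \<in> ?S}" unfolding I_def by auto
    have inj: "inj_on h {k \<in> {1..c}. h k \<in> ?S}"
      using h by (auto simp: bij_betw_def intro: inj_on_subset)
    have img: "h ` {k \<in> {1..c}. h k \<in> ?S} = ?S"
    proof
      show "h ` {k \<in> {1..c}. h k \<in> ?S} \<subseteq> ?S" by auto
      show "?S \<subseteq> h ` {k \<in> {1..c}. h k \<in> ?S}"
      proof
        fix Q assume Q: "Q \<in> ?S"
        then have "Q \<in> h ` {1..c}" using SVs h by (auto simp: bij_betw_def)
        then obtain k where "k \<in> {1..c}" "Q = h k" by blast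
        then show "Q \<in> h ` {k \<in> {1..c}. h k \<in> ?S}" using Q by blast
      qed
    qed
    have "(\<Sum>k\<in>I i \<inter> I j. (\<sigma> k)\<^sup>2) = (\<Sum>k\<in>{k \<in> {1..c}. h k \<in> ?S}. wt V (h k))"
      unfolding II by (intro sum.cong refl) (simp add: \<sigma>sq)
    also have "\<dots> = (\<Sum>Q\<in>?S. wt V Q)"
      using sum.reindex[OF inj, of "wt V"] img by simp
    also have "\<dots> = (hh (A i) + hh (A j) - river_dist (A i) (A j)) / 2"
      using i j unfolding J_def V_def
      by (intro anc_inter_sum[OF finV[unfolded V_def] oV[unfolded V_def]]) (use projV[unfolded V_def] in auto)
    finally show ?thesis by (simp add: hh_river)
  qed
  have NP: "prob_space N" unfolding N_def by (rule prodN_facts(1)[OF finK \<sigma>pos])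
  have Nind: "prob_space.indep_vars N (\<lambda>_. borel) (\<lambda>k f. f k) K"
    unfolding N_def by (rule prodN_facts(3)[OF finK \<sigma>pos])
  have Ndist: "distributed N lborel (\<lambda>f. f k) (normal_density 0 (\<sigma> k))" if "k \<in> K" for k
    unfolding N_def by (rule prodN_facts(2)[OF finK \<sigma>pos that])
  have Ym: "(\<lambda>f. \<Sum>k\<in>I i. f k) \<in> borel_measurable N" for i
  proof (rule borel_measurable_sum)
    fix k assume "k \<in> I i"
    then have "k \<in> K" using IK by auto
    then show "(\<lambda>f. f k) \<in> borel_measurable N" unfolding N_def by simp
  qed
  have GX: "centered_gaussian_rv M (\<lambda>\<omega>. \<Sum>j\<in>J. c j * B (A j) \<omega>)" for c
    unfolding combo_points[OF finJ] by (rule Bg) (simp add: finJ)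
  have dist_eq: "distr M (PiM J (\<lambda>_. borel)) (\<lambda>\<omega>. \<lambda>i\<in>J. B (A i) \<omega>)
      = distr N (PiM J (\<lambda>_. borel)) (\<lambda>\<omega>. \<lambda>i\<in>J. \<Sum>k\<in>I i. \<omega> k)"
  proof (rule cramer_wold[OF Mp NP finJ])
    show "(\<lambda>\<omega>. B (A j) \<omega>) \<in> borel_measurable M" for j by simp
    show "(\<lambda>\<omega>. \<Sum>k\<in>I j. \<omega> k) \<in> borel_measurable N" for j by (rule Ym)
    fix t :: "nat \<Rightarrow> real"
    have L: "(CLINT \<omega>|M. iexp (\<Sum>j\<in>J. t j * B (A j) \<omega>)) =
         exp (- (\<Sum>i\<in>J. \<Sum>j\<in>J. t i * t j * (LINT \<omega>|M. B (A i) \<omega> * B (A j) \<omega>)) / 2)"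
      by (rule combo_char[OF Mp finJ _ GX]) simp
    define a where "a k = (\<Sum>i\<in>J. if k \<in> I i then t i else 0)" for k
    have "(CLINT \<omega>|N. iexp (\<Sum>j\<in>J. t j * (\<Sum>k\<in>I j. \<omega> k))) = (CLINT \<omega>|N. iexp (\<Sum>k\<in>K. a k * \<omega> k))"
      unfolding a_def by (simp only: lin_regroup[OF finJ finK IK])
    also have "\<dots> = exp (- (\<Sum>k\<in>K. (a k)\<^sup>2 * (\<sigma> k)\<^sup>2) / 2)"
      unfolding N_def by (rule prodN_char[OF finK \<sigma>pos])
    also have "(\<Sum>k\<in>K. (a k)\<^sup>2 * (\<sigma> k)\<^sup>2) = (\<Sum>i\<in>J. \<Sum>j\<in>J. t i * t j * (\<Sum>k\<in>I i \<inter> I j. (\<sigma> k)\<^sup>2))"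
      unfolding a_def by (rule quad_expand[OF finJ finK IK])
    also have "\<dots> = (\<Sum>i\<in>J. \<Sum>j\<in>J. t i * t j * (LINT \<omega>|M. B (A i) \<omega> * B (A j) \<omega>))"
      by (intro sum.cong refl) (simp add: tree cov)
    finally show "(CLINT \<omega>|M. iexp (\<Sum>j\<in>J. t j * B (A j) \<omega>)) = (CLINT \<omega>|N. iexp (\<Sum>j\<in>J. t j * (\<Sum>k\<in>I j. \<omega> k)))"
      using L by simp
  qed
  show ?thesis
  proof (intro exI[of _ N] exI[of _ "\<lambda>k f. f k"] exI[of _ I] conjI)
    show "prob_space N" by (rule NP)
    show "prob_space.indep_vars N (\<lambda>_. borel) (\<lambda>k f. f k) {1..n - 1}" using Nind unfolding K_def .
    show "\<forall>k\<in>{1..n - 1}. gaussian_rv N (\<lambda>f. f k)"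
      using Ndist \<sigma>pos unfolding gaussian_rv_def K_def by blast
    show "\<forall>i\<in>{1..n}. I i \<subseteq> {1..n - 1}" using IK unfolding K_def by blast
    show "distr M (PiM {1..n} (\<lambda>_. borel)) (\<lambda>\<omega>. \<lambda>i\<in>{1..n}. B (A i) \<omega>)
        = distr N (PiM {1..n} (\<lambda>_. borel)) (\<lambda>\<omega>. \<lambda>i\<in>{1..n}. \<Sum>k\<in>I i. \<omega> k)"
      using dist_eq unfolding J_def .
  qed
qed


end
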